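(* Let $(G,E)$ be a connected simple graph and $d,\rho$ metrics on $G$ such that $d$ is quasisymmetric to $\rho$. If $d$ fits to $(G,E)$, then $\rho$ fits to $(G,E)$.
   Context: $d$ is quasisymmetric to $\rho$ if there is a homeomorphism $\theta:[0,\infty)\to[0,\infty)$ with $\rho(x,y)/\rho(x,z)\le\theta(d(x,y)/d(x,z))$ for all $x,y,z$ with $x\ne z$. A metric $d$ fits to $(G,E)$ if (F1) there is $C>0$ with $d(x,y)\le Cd(x,z)$ for all $x,y,z$ with $x\sim y$ and $x\ne z$; and (F2) for every $\epsilon>0$ there exist $r>0$, $n\ge1$ and $x_0,\dots,x_n\in G$ with $x_i\in B_d(x_0,r)$ for $i\in[0,n-1]$, $x_n\notin B_d(x_0,r)$, and $d(x_i,x_{i-1})\le\epsilon r$, $x_i\sim x_{i-1}$ for $i\in[1,n]$. *)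

theory Defs
  imports "HOL-Analysis.Analysis"
begin

definition simple_graph :: "'a set \<Rightarrow> ('a \<Rightarrow> 'a \<Rightarrow> bool) \<Rightarrow> bool" where
  "simple_graph G E \<longleftrightarrow>
     (\<forall>x y. E x y \<longrightarrow> x \<in> G \<and> y \<in> G) \<and>
     (\<forall>x y. E x y \<longrightarrow> E y x) \<and>
     (\<forall>x. \<not> E x x)"

definition connected_graph :: "'a set \<Rightarrow> ('a \<Rightarrow> 'a \<Rightarrow> bool) \<Rightarrow> bool" where
  "connected_graph G E \<longleftrightarrow> (\<forall>x\<in>G. \<forall>y\<in>G. E\<^sup>*\<^sup>* x y)"

definition metric_on :: "'a set \<Rightarrow> ('a \<Rightarrow> 'a \<Rightarrow> real) \<Rightarrow> bool" where
  "metric_on G d \<longleftrightarrow>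
     (\<forall>x\<in>G. \<forall>y\<in>G. 0 \<le> d x y) \<and>
     (\<forall>x\<in>G. \<forall>y\<in>G. d x y = 0 \<longleftrightarrow> x = y) \<and>
     (\<forall>x\<in>G. \<forall>y\<in>G. d x y = d y x) \<and>
     (\<forall>x\<in>G. \<forall>y\<in>G. \<forall>z\<in>G. d x z \<le> d x y + d y z)"

definition quasisymmetric_to :: "'a set \<Rightarrow> ('a \<Rightarrow> 'a \<Rightarrow> real) \<Rightarrow> ('a \<Rightarrow> 'a \<Rightarrow> real) \<Rightarrow> bool" where
  "quasisymmetric_to G d \<rho> \<longleftrightarrow>
     (\<exists>\<theta> :: real \<Rightarrow> real. (\<exists>\<theta>'. homeomorphism {0..} {0..} \<theta> \<theta>') \<and>
        (\<forall>x\<in>G. \<forall>y\<in>G. \<forall>z\<in>G. x \<noteq> z \<longrightarrow> \<rho> x y / \<rho> x z \<le> \<theta> (d x y / d x z)))"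

definition fits :: "'a set \<Rightarrow> ('a \<Rightarrow> 'a \<Rightarrow> bool) \<Rightarrow> ('a \<Rightarrow> 'a \<Rightarrow> real) \<Rightarrow> bool" where
  "fits G E d \<longleftrightarrow>
     (\<exists>C>0. \<forall>x\<in>G. \<forall>y\<in>G. \<forall>z\<in>G. E x y \<and> x \<noteq> z \<longrightarrow> d x y \<le> C * d x z) \<and>
     (\<forall>\<epsilon>>0. \<exists>r>0. \<exists>n\<ge>1. \<exists>xs :: nat \<Rightarrow> 'a.
        (\<forall>i\<le>n. xs i \<in> G) \<and>
        (\<forall>i<n. d (xs 0) (xs i) < r) \<and>
        \<not> (d (xs 0) (xs n) < r) \<and>
        (\<forall>i\<in>{1..n}. d (xs i) (xs (i - 1)) \<le> \<epsilon> * r \<and> E (xs i) (xs (i - 1))))"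

end

theory Submission
  imports Defs
begin

lemma theta0:
  fixes \<theta> \<theta>' :: "real \<Rightarrow> real"
  assumes h: "homeomorphism {0..} {0..} \<theta> \<theta>'"
  shows "\<theta> 0 = (0::real)"
proof (rule ccontr)
  assume ne: "\<theta> 0 \<noteq> 0"
  have inv: "\<And>u. u \<ge> 0 \<Longrightarrow> \<theta>' (\<theta> u) = u"
    and img1: "\<theta> ` {0..} = {0..}"
    and inv2: "\<And>u. u \<ge> 0 \<Longrightarrow> \<theta> (\<theta>' u) = u"
    and img2: "\<theta>' ` {0..} = {0..}"
    and cont: "continuous_on {0..} \<theta>"
    using h unfolding homeomorphism_def by simp_all
  have mem: "\<theta> u \<in> {0..}" "\<theta>' u \<in> {0..}" if "u \<ge> (0::real)" for u
  proof -
    have "\<theta> u \<in> \<theta> ` {0..}" "\<theta>' u \<in> \<theta>' ` {0..}" using that by simp_all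
    thus "\<theta> u \<in> {0..}" "\<theta>' u \<in> {0..}" using img1 img2 by simp_all
  qed
  have a0: "\<theta> 0 \<ge> 0" using mem(1)[of 0] by simp
  hence apos: "\<theta> 0 > 0" using ne by simp
  define s where "s = \<theta>' 0"
  have s0: "s \<ge> 0" "\<theta> s = 0" using inv2[of 0] mem(2)[of 0] unfolding s_def by auto
  define t where "t = \<theta>' (\<theta> 0 + 1)"
  have t0: "t \<ge> 0" "\<theta> t = \<theta> 0 + 1" using inv2[of "\<theta> 0 + 1"] a0 mem(2)[of "\<theta> 0 + 1"] unfolding t_def by auto
  have sp: "s > 0" using s0 ne by (cases "s = 0") auto
  have tp: "t > 0" using t0 by (cases "t = 0") auto
  have inj: "\<And>u v. u \<ge> 0 \<Longrightarrow> v \<ge> 0 \<Longrightarrow> \<theta> u = \<theta> v \<Longrightarrow> u = v"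
  proof -
    fix u v :: real assume uv: "u \<ge> 0" "v \<ge> 0" "\<theta> u = \<theta> v"
    have "u = \<theta>' (\<theta> u)" using inv[OF uv(1)] by simp
    also have "\<dots> = \<theta>' (\<theta> v)" using uv(3) by (rule arg_cong)
    also have "\<dots> = v" using inv[OF uv(2)] .
    finally show "u = v" .
  qed
  obtain u where u: "min s t \<le> u" "\<theta> u = \<theta> 0"
  proof (cases "s \<le> t")
    case True
    have "continuous_on {s..t} \<theta>" using s0 by (intro continuous_on_subset[OF cont]) auto
    then obtain u where "s \<le> u" "u \<le> t" "\<theta> u = \<theta> 0"
      using IVT'[where f=\<theta> and a=s and y="\<theta> 0" and b=t] s0 t0 a0 True by auto
    then show ?thesis using that by auto
  next
    case False
    have "continuous_on {t..s} \<theta>" using t0 by (intro continuous_on_subset[OF cont]) auto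
    then obtain u where "t \<le> u" "u \<le> s" "\<theta> u = \<theta> 0"
      using IVT2'[where f=\<theta> and a=t and y="\<theta> 0" and b=s] s0 t0 a0 False by auto
    then show ?thesis using that by auto
  qed
  have "u > 0" using u(1) sp tp by linarith
  moreover have "u = 0" using inj[of u 0] u \<open>u > 0\<close> by simp
  ultimately show False by simp
qed

theorem lemma4p1:
  fixes G :: "'a set" and E :: "'a \<Rightarrow> 'a \<Rightarrow> bool" and d \<rho> :: "'a \<Rightarrow> 'a \<Rightarrow> real"
  assumes "simple_graph G E" and "connected_graph G E"
    and "metric_on G d" and "metric_on G \<rho>"
    and "quasisymmetric_to G d \<rho>"
    and "fits G E d"
  shows "fits G E \<rho>"
proof -
  obtain \<theta> \<theta>' where h: "homeomorphism {0..} {0..} \<theta> \<theta>'"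
    and qs: "\<And>x y z. x\<in>G \<Longrightarrow> y\<in>G \<Longrightarrow> z\<in>G \<Longrightarrow> x \<noteq> z \<Longrightarrow> \<rho> x y / \<rho> x z \<le> \<theta> (d x y / d x z)"
    using assms(5) unfolding quasisymmetric_to_def by blast
  have cont: "continuous_on {0..} \<theta>" using h unfolding homeomorphism_def by blast
  have th0: "\<theta> 0 = 0" using theta0[OF h] .
  note md = assms(3)[unfolded metric_on_def]
  have dn: "\<And>x y. x \<in> G \<Longrightarrow> y \<in> G \<Longrightarrow> 0 \<le> d x y"
    using md[THEN conjunct1] by (elim ballE) auto
  have dz: "\<And>x y. x \<in> G \<Longrightarrow> y \<in> G \<Longrightarrow> d x y = 0 \<longleftrightarrow> x = y"
    using md[THEN conjunct2, THEN conjunct1] by (elim ballE) auto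
  have ds: "\<And>x y. x \<in> G \<Longrightarrow> y \<in> G \<Longrightarrow> d x y = d y x"
    using md[THEN conjunct2, THEN conjunct2, THEN conjunct1] by (elim ballE) auto
  have dt: "\<And>x y z. x \<in> G \<Longrightarrow> y \<in> G \<Longrightarrow> z \<in> G \<Longrightarrow> d x z \<le> d x y + d y z"
    using md[THEN conjunct2, THEN conjunct2, THEN conjunct2] by (elim ballE) auto
  note mrho = assms(4)[unfolded metric_on_def]
  have pn: "\<And>x y. x \<in> G \<Longrightarrow> y \<in> G \<Longrightarrow> 0 \<le> \<rho> x y"
    using mrho[THEN conjunct1] by (elim ballE) auto
  have pz: "\<And>x y. x \<in> G \<Longrightarrow> y \<in> G \<Longrightarrow> \<rho> x y = 0 \<longleftrightarrow> x = y"
    using mrho[THEN conjunct2, THEN conjunct1] by (elim ballE) auto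
  have ps: "\<And>x y. x \<in> G \<Longrightarrow> y \<in> G \<Longrightarrow> \<rho> x y = \<rho> y x"
    using mrho[THEN conjunct2, THEN conjunct2, THEN conjunct1] by (elim ballE) auto
  have pt: "\<And>x y z. x \<in> G \<Longrightarrow> y \<in> G \<Longrightarrow> z \<in> G \<Longrightarrow> \<rho> x z \<le> \<rho> x y + \<rho> y z"
    using mrho[THEN conjunct2, THEN conjunct2, THEN conjunct2] by (elim ballE) auto
  have dpos: "d x y > 0" if "x \<in> G" "y \<in> G" "x \<noteq> y" for x y
    using dn[OF that(1,2)] dz[OF that(1,2)] that(3) by (simp add: order_less_le)
  have ppos: "\<rho> x y > 0" if "x \<in> G" "y \<in> G" "x \<noteq> y" for x y
    using pn[OF that(1,2)] pz[OF that(1,2)] that(3) by (simp add: order_less_le)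
  note mf = assms(6)[unfolded fits_def]
  obtain C where C: "C > 0" and F1': "\<forall>x\<in>G. \<forall>y\<in>G. \<forall>z\<in>G. E x y \<and> x \<noteq> z \<longrightarrow> d x y \<le> C * d x z"
    using mf[THEN conjunct1] by blast
  have F1: "d x y \<le> C * d x z" if "x\<in>G" "y\<in>G" "z\<in>G" "E x y" "x \<noteq> z" for x y z
    using F1' that by simp
  have F2: "\<forall>\<epsilon>>0. \<exists>r>0. \<exists>n\<ge>1. \<exists>xs :: nat \<Rightarrow> 'a.
        (\<forall>i\<le>n. xs i \<in> G) \<and>
        (\<forall>i<n. d (xs 0) (xs i) < r) \<and>
        \<not> (d (xs 0) (xs n) < r) \<and>
        (\<forall>i\<in>{1..n}. d (xs i) (xs (i - 1)) \<le> \<epsilon> * r \<and> E (xs i) (xs (i - 1)))"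
    using mf[THEN conjunct2] .
  have "compact (\<theta> ` {0..C})"
    by (rule compact_continuous_image) (rule continuous_on_subset[OF cont], auto)
  then obtain M where M: "\<And>t. t \<in> {0..C} \<Longrightarrow> \<bar>\<theta> t\<bar> \<le> M"
  proof -
    have "bounded (\<theta> ` {0..C})" using \<open>compact (\<theta> ` {0..C})\<close> by (rule compact_imp_bounded)
    then obtain M where "\<forall>x\<in>\<theta> ` {0..C}. \<bar>x\<bar> \<le> M" unfolding bounded_real by blast
    thus ?thesis using that by blast
  qed
  have G1: "\<exists>C>0. \<forall>x\<in>G. \<forall>y\<in>G. \<forall>z\<in>G. E x y \<and> x \<noteq> z \<longrightarrow> \<rho> x y \<le> C * \<rho> x z"
  proof (intro exI[of _ "max M 1"] conjI ballI impI)
    fix x y z assume xyz: "x \<in> G" "y \<in> G" "z \<in> G" and e: "E x y \<and> x \<noteq> z"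
    have dzp: "d x z > 0" using dpos xyz e by blast
    have pzp: "\<rho> x z > 0" using ppos xyz e by blast
    have "d x y \<ge> 0" using dn xyz by blast
    moreover have "d x y \<le> C * d x z" using F1[OF xyz] e by blast
    ultimately have "d x y / d x z \<in> {0..C}" using dzp by (simp add: divide_simps)
    hence "\<bar>\<theta> (d x y / d x z)\<bar> \<le> M" by (rule M)
    hence "\<rho> x y / \<rho> x z \<le> M" using qs[OF xyz] e by linarith
    hence "\<rho> x y / \<rho> x z \<le> max M 1" by linarith
    thus "\<rho> x y \<le> max M 1 * \<rho> x z" using pzp by (simp add: divide_simps)
  qed simp
  have G2: "\<exists>r>0. \<exists>n\<ge>1. \<exists>xs :: nat \<Rightarrow> 'a.
        (\<forall>i\<le>n. xs i \<in> G) \<and>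
        (\<forall>i<n. \<rho> (xs 0) (xs i) < r) \<and>
        \<not> (\<rho> (xs 0) (xs n) < r) \<and>
        (\<forall>i\<in>{1..n}. \<rho> (xs i) (xs (i - 1)) \<le> \<epsilon> * r \<and> E (xs i) (xs (i - 1)))"
    if ep: "\<epsilon> > 0" for \<epsilon>
  proof -
    have "0 \<in> {0::real..}" by simp
    moreover have "\<epsilon>/2 > 0" using ep by simp
    ultimately obtain \<eta> where eta: "\<eta> > 0" and etaP: "\<forall>x'\<in>{0..}. dist x' 0 < \<eta> \<longrightarrow> dist (\<theta> x') (\<theta> 0) < \<epsilon>/2"
      using cont unfolding continuous_on_iff by blast
    have etaQ: "\<theta> t < \<epsilon>/2" if "0 \<le> t" "t < \<eta>" for t
    proof -
      have "dist (\<theta> t) (\<theta> 0) < \<epsilon>/2" using etaP that by (simp add: dist_real_def)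
      thus ?thesis using th0 by (simp add: dist_real_def)
    qed
    have "\<eta>/4 > 0" using eta by simp
    then obtain r :: real and n :: nat and xs :: "nat \<Rightarrow> 'a" where r: "r > 0" and n: "n \<ge> 1" and xG: "\<forall>i\<le>n. xs i \<in> G"
      and inb: "\<forall>i<n. d (xs 0) (xs i) < r" and outb: "\<not> (d (xs 0) (xs n) < r)"
      and stp: "\<forall>i\<in>{1..n}. d (xs i) (xs (i - 1)) \<le> (\<eta>/4) * r \<and> E (xs i) (xs (i - 1))"
      using mp[OF spec[OF F2, of "\<eta>/4"] \<open>\<eta>/4 > 0\<close>]
      by blast
    have x0G: "xs 0 \<in> G" and xnG: "xs n \<in> G" using xG by auto
    have "xs 0 \<noteq> xs n"
    proof
      assume "xs 0 = xs n"
      hence "d (xs 0) (xs n) = 0" using dz[OF x0G xnG] by blast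
      thus False using outb r by linarith
    qed
    define R where "R = \<rho> (xs 0) (xs n)"
    have Rp: "R > 0" unfolding R_def using ppos x0G xnG \<open>xs 0 \<noteq> xs n\<close> by blast
    define m where "m = (LEAST m. R \<le> \<rho> (xs 0) (xs m))"
    have mR: "R \<le> \<rho> (xs 0) (xs m)" unfolding m_def by (rule LeastI[of _ n]) (simp add: R_def)
    have mn: "m \<le> n" unfolding m_def by (rule Least_le) (simp add: R_def)
    have bel: "\<rho> (xs 0) (xs i) < R" if "i < m" for i
      using not_less_Least[of i "\<lambda>m. R \<le> \<rho> (xs 0) (xs m)"] that unfolding m_def by simp
    have p00: "\<rho> (xs 0) (xs 0) = 0" using pz[OF x0G x0G] by blast
    have m1: "m \<ge> 1"
    proof (rule ccontr)
      assume "\<not> m \<ge> 1" hence "m = 0" by simp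
      thus False using mR Rp p00 by simp
    qed
    show ?thesis
    proof (intro exI[of _ R] conjI exI[of _ m] exI[of _ xs] allI impI ballI)
      show "0 < R" by fact
      show "1 \<le> m" by fact
      show "xs i \<in> G" if "i \<le> m" for i using xG that mn by auto
      show "\<rho> (xs 0) (xs i) < R" if "i < m" for i using bel that by blast
      show "\<not> \<rho> (xs 0) (xs m) < R" using mR by simp
      fix i assume i: "i \<in> {1..m}"
      have iin: "i \<in> {1..n}" using i mn by auto
      show "E (xs i) (xs (i - 1))" using stp iin by blast
      define j where "j = i - 1"
      have jm: "j < m" and jn: "j < n" using i mn unfolding j_def by auto
      have xjG: "xs j \<in> G" and xiG: "xs i \<in> G" using xG jn i mn by auto
      have "d (xs i) (xs j) \<le> (\<eta>/4) * r" using stp iin unfolding j_def by blast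
      hence dstep: "d (xs j) (xs i) \<le> (\<eta>/4) * r" using ds[OF xjG xiG] by simp
      have "d (xs 0) (xs j) < r" using inb jn by blast
      have tri: "d (xs 0) (xs n) \<le> d (xs 0) (xs j) + d (xs j) (xs n)" using dt[OF x0G xjG xnG] .
      have sym: "d (xs 0) (xs j) = d (xs j) (xs 0)" using ds[OF x0G xjG] .
      obtain z where zc: "z = xs 0 \<or> z = xs n" and dzz: "d (xs j) z \<ge> r/2"
      proof (cases "d (xs j) (xs 0) \<ge> r/2")
        case True thus ?thesis using that by blast
      next
        case False
        hence "d (xs j) (xs n) \<ge> r/2" using tri sym outb by linarith
        thus ?thesis using that by blast
      qed
      have zG: "z \<in> G" using zc x0G xnG by auto
      have dzp: "d (xs j) z > 0" using dzz r by linarith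
      have jz: "xs j \<noteq> z"
      proof
        assume "xs j = z"
        hence "d (xs j) z = 0" using dz[OF xjG zG] by blast
        thus False using dzp by linarith
      qed
      have pzp: "\<rho> (xs j) z > 0" using ppos xjG zG jz by blast
      have dji: "d (xs j) (xs i) \<ge> 0" using dn xjG xiG by blast
      have tle: "d (xs j) (xs i) / d (xs j) z \<le> \<eta>/2"
      proof -
        have "d (xs j) (xs i) / d (xs j) z \<le> ((\<eta>/4) * r) / (r/2)"
          using dstep dzz dji dzp r by (intro frac_le) auto
        also have "\<dots> = \<eta>/2" using r by (simp add: field_simps)
        finally show ?thesis .
      qed
      have t0: "0 \<le> d (xs j) (xs i) / d (xs j) z" using dji dzp by simp
      have t1: "d (xs j) (xs i) / d (xs j) z < \<eta>" using tle eta by linarith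
      have "\<rho> (xs j) (xs i) / \<rho> (xs j) z < \<epsilon>/2"
        using qs[OF xjG xiG zG jz] etaQ[OF t0 t1] by linarith
      hence A: "\<rho> (xs j) (xs i) \<le> (\<epsilon>/2) * \<rho> (xs j) z" using pzp by (simp add: divide_simps)
      have "\<rho> (xs j) z \<le> \<rho> (xs j) (xs 0) + \<rho> (xs 0) z" using pt[OF xjG x0G zG] .
      moreover have "\<rho> (xs j) (xs 0) < R" using bel[OF jm] ps[OF xjG x0G] by simp
      moreover have "\<rho> (xs 0) z \<le> R"
        using zc p00 Rp unfolding R_def by auto
      ultimately have "\<rho> (xs j) z \<le> 2 * R" by linarith
      hence "(\<epsilon>/2) * \<rho> (xs j) z \<le> (\<epsilon>/2) * (2 * R)" using ep by (intro mult_left_mono) auto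
      hence "\<rho> (xs j) (xs i) \<le> \<epsilon> * R" using A by linarith
      thus "\<rho> (xs i) (xs (i - 1)) \<le> \<epsilon> * R" using ps[OF xjG xiG] unfolding j_def by simp
    qed
  qed
  show ?thesis unfolding fits_def
  proof (intro conjI allI impI)
    show "\<exists>C>0. \<forall>x\<in>G. \<forall>y\<in>G. \<forall>z\<in>G. E x y \<and> x \<noteq> z \<longrightarrow> \<rho> x y \<le> C * \<rho> x z" by (rule G1)
  next
    fix \<epsilon> :: real assume "\<epsilon> > 0"
    thus "\<exists>r>0. \<exists>n\<ge>1. \<exists>xs :: nat \<Rightarrow> 'a.
        (\<forall>i\<le>n. xs i \<in> G) \<and>
        (\<forall>i<n. \<rho> (xs 0) (xs i) < r) \<and>
        \<not> (\<rho> (xs 0) (xs n) < r) \<and>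
        (\<forall>i\<in>{1..n}. \<rho> (xs i) (xs (i - 1)) \<le> \<epsilon> * r \<and> E (xs i) (xs (i - 1)))" by (rule G2)
  qed
qed

end
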